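(* Let $(a_n)_{n\ge 0}$ be the sequence defined by $a_0=5$, $a_1=13$ and $a_{n+1}=6a_n-a_{n-1}$ for $n\ge 1$, and let $(b_n)_{n\ge 0}$ be the sequence defined by $b_0=5$, $b_1=17$ and $b_{n+1}=6b_n-b_{n-1}$ for $n\ge 1$. Then $$\{z : \exists\, x,y\in\mathbb{N}^{+} \text{ with } x^2+y^2=z^2,\ y=x+7,\ z\in\mathbb{N}^{+},\ \gcd(x,y,z)=1\} \;=\; \{a_n : n\ge 1\}\cup\{b_n : n\ge 1\}.$$
   Context: $\mathbb{N}^{+}$ denotes the set of positive integers. A triple $(x,y,z)$ of positive integers with $x^2+y^2=z^2$ and $\gcd(x,y,z)=1$ is a primitive Pythagorean triple; the left-hand set is the set of largest entries $z$ of primitive Pythagorean triples whose two smaller entries differ by $7$. *)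

theory Defs
  imports Main
begin

fun seqA :: "nat \<Rightarrow> int" where
  "seqA 0 = 5"
| "seqA (Suc 0) = 13"
| "seqA (Suc (Suc n)) = 6 * seqA (Suc n) - seqA n"

fun seqB :: "nat \<Rightarrow> int" where
  "seqB 0 = 5"
| "seqB (Suc 0) = 17"
| "seqB (Suc (Suc n)) = 6 * seqB (Suc n) - seqB n"

end

theory Submission
  imports Defs
begin

fun T :: "int \<times> int \<Rightarrow> int \<times> int" where
  "T (u, z) = (3*u + 4*z, 2*u + 3*z)"

fun PA :: "nat \<Rightarrow> int \<times> int" where
  "PA 0 = (17, 13)"
| "PA (Suc n) = T (PA n)"

fun PB :: "nat \<Rightarrow> int \<times> int" where
  "PB 0 = (1, 5)"
| "PB (Suc n) = T (PB n)"

lemma seven_T: "\<not> (7 dvd u \<and> 7 dvd (z::int)) \<Longrightarrow> \<not> (7 dvd 3 * u + 4 * z \<and> 7 dvd 2 * u + 3 * z)"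
proof
  assume a: "\<not> (7 dvd u \<and> 7 dvd (z::int))" and b: "7 dvd 3 * u + 4 * z \<and> 7 dvd 2 * u + 3 * z"
  have "u = 3*(3 * u + 4 * z) - 4*(2 * u + 3 * z)" "z = 3*(2 * u + 3 * z) - 2*(3 * u + 4 * z)" by simp_all
  then have "7 dvd u" "7 dvd z" using b by (metis dvd_diff dvd_mult)+
  then show False using a by simp
qed

lemma seven_Tinv: "\<not> (7 dvd u \<and> 7 dvd (z::int)) \<Longrightarrow> \<not> (7 dvd 3 * u - 4 * z \<and> 7 dvd 3 * z - 2 * u)"
proof
  assume a: "\<not> (7 dvd u \<and> 7 dvd (z::int))" and b: "7 dvd 3 * u - 4 * z \<and> 7 dvd 3 * z - 2 * u"
  have "u = 3*(3 * u - 4 * z) + 4*(3 * z - 2 * u)" "z = 2*(3 * u - 4 * z) + 3*(3 * z - 2 * u)" by simp_all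
  then have "7 dvd u" "7 dvd z" using b by (metis dvd_add dvd_mult)+
  then show False using a by simp
qed

definition good :: "int \<times> int \<Rightarrow> bool" where
  "good p \<longleftrightarrow> (fst p)^2 - 2*(snd p)^2 = -49 \<and> odd (fst p) \<and> fst p > 0 \<and> snd p > 0
     \<and> \<not> (7 dvd fst p \<and> 7 dvd snd p)"

lemma good_T: "good p \<Longrightarrow> good (T p)"
proof -
  assume g: "good p"
  obtain u z where p: "p = (u, z)" by (cases p)
  have e: "u^2 - 2*z^2 = -49" and o: "odd u" and pos: "u > 0" "z > 0"
    and n7: "\<not> (7 dvd u \<and> 7 dvd z)" using g p by (auto simp: good_def)
  have "(3*u+4*z)^2 - 2*(2*u+3*z)^2 = u^2 - 2*z^2" by (simp add: power2_eq_square algebra_simps)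
  moreover have "odd (3*u+4*z)" using o by simp
  moreover have "\<not> (7 dvd (3*u+4*z) \<and> 7 dvd (2*u+3*z))" using seven_T[OF n7] by simp
  ultimately show ?thesis using e pos p by (simp add: good_def)
qed

lemma good_PA: "good (PA n)"
proof (induction n)
  case 0 show ?case by (simp add: good_def)
next
  case (Suc n) then show ?case by (simp only: PA.simps good_T)
qed

lemma good_PB: "good (PB n)"
proof (induction n)
  case 0 show ?case by (simp add: good_def)
next
  case (Suc n) then show ?case by (simp only: PB.simps good_T)
qed

lemma PA_fst: "fst (PA n) \<ge> 17"
proof (induction n)
  case 0 then show ?case by simp
next
  case (Suc n)
  obtain u z where p: "PA n = (u,z)" by (cases "PA n")
  have "z > 0" using good_PA[of n] p by (simp add: good_def)
  then show ?case using Suc p by simp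
qed

lemma PB_fst: "fst (PB (Suc n)) \<ge> 23"
proof -
  obtain u z where p: "PB n = (u,z)" by (cases "PB n")
  have "z \<ge> 5"
  proof (cases n)
    case 0 then show ?thesis using p by simp
  next
    case (Suc m)
    obtain a b where q: "PB m = (a,b)" by (cases "PB m")
    have "a > 0" "b > 0" using good_PB[of m] q by (auto simp: good_def)
    then show ?thesis using p q Suc by auto
  qed
  moreover have "u > 0" using good_PB[of n] p by (simp add: good_def)
  ultimately show ?thesis using p by simp
qed

lemma PA_seq: "snd (PA n) = seqA (Suc n) \<and> snd (PA (Suc n)) = seqA (Suc (Suc n))"
proof (induction n)
  case 0 then show ?case by simp
next
  case (Suc n)
  obtain u z where p: "PA n = (u,z)" by (cases "PA n")
  show ?case using Suc p by (simp del: seqA.simps add: seqA.simps(3)[of "Suc n"])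
qed

lemma PB_seq: "snd (PB n) = seqB n \<and> snd (PB (Suc n)) = seqB (Suc n)"
proof (induction n)
  case 0 then show ?case by simp
next
  case (Suc n)
  obtain u z where p: "PB n = (u,z)" by (cases "PB n")
  show ?case using Suc p by (simp del: seqB.simps add: seqB.simps(3)[of n])
qed

lemma small_int_cases:
  fixes z :: int
  assumes "0 < z" "z < 15"
  shows "z \<in> {1,2,3,4,5,6,7,8,9,10,11,12,13,14}"
proof -
  have "z \<in> {1..14}" using assms by simp
  also have "{1..14::int} = set [1..14]" by (rule set_upto[symmetric])
  also have "\<dots> = {1,2,3,4,5,6,7,8,9,10,11,12,13,14}"
    by (simp add: upto.simps)
  finally show ?thesis .
qed

lemma small_int_cases20:
  fixes z :: int
  assumes "0 < z" "z < 21"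
  shows "z \<in> {1,2,3,4,5,6,7,8,9,10,11,12,13,14,15,16,17,18,19,20}"
proof -
  have "z \<in> {1..20}" using assms by simp
  also have "{1..20::int} = set [1..20]" by (rule set_upto[symmetric])
  also have "\<dots> = {1,2,3,4,5,6,7,8,9,10,11,12,13,14,15,16,17,18,19,20}"
    by (simp add: upto.simps)
  finally show ?thesis .
qed

lemma small_sol: fixes u z :: int
  assumes zs: "z \<in> {1,2,3,4,5,6,7,8,9,10,11,12,13,14}" and us: "u \<in> {1,2,3,4,5,6,7,8,9,10,11,12,13,14,15,16,17,18,19,20}"
  and e: "u^2 - 2*z^2 = -49" and n7: "\<not> (7 dvd u \<and> 7 dvd z)"
  shows "(u, z) = (1,5) \<or> (u, z) = (17, 13)"
proof -
  have e2: "u*u = 2*(z*z) - 49" using e by (simp add: power2_eq_square)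
  show ?thesis using us zs e2 n7
    apply (simp only: insert_iff empty_iff simp_thms)
    apply (elim disjE)
    apply simp_all
    done
qed

lemma complete:
  "\<forall>u. u > 0 \<longrightarrow> u^2 - 2*(int z)^2 = -49 \<longrightarrow> z > 0 \<longrightarrow> \<not> (7 dvd u \<and> 7 dvd int z)
     \<longrightarrow> (\<exists>n. (u, int z) = PA n \<or> (u, int z) = PB n)"
proof (induction z rule: less_induct)
  case (less z)
  show ?case
  proof (intro allI impI)
    fix u :: int
    assume u: "u > 0" and e: "u^2 - 2*(int z)^2 = -49" and zp: "z > 0"
      and n7: "\<not> (7 dvd u \<and> 7 dvd int z)"
    show "\<exists>n. (u, int z) = PA n \<or> (u, int z) = PB n"
    proof (cases "z < 15")
      case True
      have zs: "int z \<in> {1,2,3,4,5,6,7,8,9,10,11,12,13,14}"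
        using True zp small_int_cases[of "int z"] by simp
      have "u^2 < 21^2" using e True
      proof -
        have "int z \<le> 14" using True by simp
        then have "(int z)^2 \<le> 14^2" by (intro power_mono) auto
        then show ?thesis using e by simp
      qed
      then have "u < 21" by (rule power_less_imp_less_base) simp
      then have us: "u \<in> {1,2,3,4,5,6,7,8,9,10,11,12,13,14,15,16,17,18,19,20}"
        using u small_int_cases20 by simp
      have "(u, int z) = (1,5) \<or> (u, int z) = (17, 13)"
        using small_sol[OF zs us] e n7 by simp
      then show ?thesis
        by (metis PA.simps(1) PB.simps(1))
    next
      case False
      define u' where "u' = 3*u - 4*int z"
      define z' where "z' = 3*int z - 2*u"
      have zz: "int z \<ge> 15" using False by simp
      have "(int z)^2 \<ge> 15^2" using zz by (intro power_mono) auto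
      then have z225: "(int z)^2 \<ge> 225" by simp
      have U: "u^2 = 2*(int z)^2 - 49" using e by simp
      have sq1: "(4 * int z)^2 = 16*(int z)^2" "(3*u)^2 = 9*u^2" "(2*u)^2 = 4*u^2"
        "(3 * int z)^2 = 9*(int z)^2" by (simp_all add: power_mult_distrib)
      have "(4 * int z)^2 < (3*u)^2" using U sq1 z225 by linarith
      then have "4 * int z < 3*u" by (rule power_less_imp_less_base) (use u in simp)
      then have u'p: "u' > 0" unfolding u'_def by simp
      have "(2*u)^2 < (3* int z)^2" using U sq1 z225 by linarith
      then have "2*u < 3*int z" by (rule power_less_imp_less_base) (use zz in simp)
      then have z'p: "z' > 0" unfolding z'_def by simp
      have "(int z)^2 < u^2" using U z225 by linarith
      then have "int z < u" by (rule power_less_imp_less_base) (use u in simp)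
      then have z'l: "z' < int z" unfolding z'_def by simp
      obtain m where m: "z' = int m" using z'p by (metis zero_le_imp_eq_int less_imp_le)
      have ml: "m < z" using z'l m by simp
      have e': "u'^2 - 2*(int m)^2 = -49"
        unfolding m[symmetric] u'_def z'_def using e
        by (simp add: power2_eq_square algebra_simps)
      have n7': "\<not> (7 dvd u' \<and> 7 dvd int m)"
        unfolding m[symmetric] u'_def z'_def using seven_Tinv[OF n7] by simp
      obtain n where n: "(u', int m) = PA n \<or> (u', int m) = PB n"
        using less.IH[OF ml] u'p e' n7' m z'p by auto
      have Tq: "T (u', int m) = (u, int z)" unfolding m[symmetric] u'_def z'_def by simp
      show ?thesis using n Tq
        by (metis PA.simps(2) PB.simps(2))
    qed
  qed
qed

theorem mainTheorem1:
  shows "{z :: int. \<exists>x y :: int. x > 0 \<and> y > 0 \<and> z > 0 \<and> x^2 + y^2 = z^2 \<and> y = x + 7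
            \<and> gcd (gcd x y) z = 1}
         = {seqA n | n. n \<ge> 1} \<union> {seqB n | n. n \<ge> 1}"
proof (rule set_eqI, rule iffI)
  fix z :: int
  assume "z \<in> {z :: int. \<exists>x y :: int. x > 0 \<and> y > 0 \<and> z > 0 \<and> x^2 + y^2 = z^2 \<and> y = x + 7
            \<and> gcd (gcd x y) z = 1}"
  then obtain x y :: int where h: "x > 0" "y > 0" "z > 0" "x^2 + y^2 = z^2" "y = x + 7"
    "gcd (gcd x y) z = 1" by auto
  define u where "u = 2*x+7"
  have e: "u^2 - 2*z^2 = -49" using h(4,5) unfolding u_def
    by (simp add: power2_eq_square algebra_simps)
  have n7: "\<not> (7 dvd u \<and> 7 dvd z)"
  proof
    assume a: "7 dvd u \<and> 7 dvd z"
    then have "7 dvd 2*x" unfolding u_def by (metis add_diff_cancel_right' dvd_diff dvd_refl)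
    then have "7 dvd 4*(2*x) - 7*x" by (metis dvd_diff dvd_mult dvd_triv_left)
    then have "7 dvd x" by simp
    then have "7 dvd x" "7 dvd y" using h(5) by simp_all
    then have "(7::int) dvd gcd (gcd x y) z" using a by simp
    then show False using h(6) by simp
  qed
  obtain k where k: "z = int k" using h(3) by (metis zero_le_imp_eq_int less_imp_le)
  have "u > 0" unfolding u_def using h(1) by simp
  then obtain n where n: "(u, z) = PA n \<or> (u, z) = PB n"
    using complete[of k] e n7 k h(3) by auto
  show "z \<in> {seqA n | n. n \<ge> 1} \<union> {seqB n | n. n \<ge> 1}"
  proof (cases "(u, z) = PA n")
    case True
    then have "z = seqA (Suc n)" using PA_seq[of n] by (metis snd_conv)
    then show ?thesis by (intro UnI1 CollectI exI[of _ "Suc n"]) simp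
  next
    case False
    then have p: "(u, z) = PB n" using n by simp
    show ?thesis
    proof (cases n)
      case 0 then show ?thesis using p h(1) unfolding u_def by simp
    next
      case (Suc m)
      then have "z = seqB n" using PB_seq[of n] p by (metis snd_conv)
      then show ?thesis using Suc by (intro UnI2 CollectI exI[of _ n]) simp
    qed
  qed
next
  fix z :: int
  assume "z \<in> {seqA n | n. n \<ge> 1} \<union> {seqB n | n. n \<ge> 1}"
  then obtain n where n1: "n \<ge> 1" and zn: "z = seqA n \<or> z = seqB n" by blast
  then obtain m where nm: "n = Suc m" by (cases n) auto
  have "\<exists>p. good p \<and> fst p \<ge> 17 \<and> snd p = z"
  proof (cases "z = seqA n")
    case True
    then show ?thesis using good_PA[of m] PA_fst[of m] PA_seq[of m] nm by blast
  next
    case False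
    then have "z = seqB n" using zn by simp
    moreover have "fst (PB n) \<ge> 17" using PB_fst[of m] nm by simp
    ultimately show ?thesis using good_PB[of n] PB_seq[of n] by blast
  qed
  then obtain p where p: "good p" "fst p \<ge> 17" "snd p = z" by blast
  obtain u where pu: "p = (u, z)" using p(3) by (cases p) auto
  have g: "u^2 - 2*z^2 = -49" "odd u" "z > 0" "\<not> (7 dvd u \<and> 7 dvd z)" "u \<ge> 17"
    using p pu by (auto simp: good_def)
  define x where "x = (u - 7) div 2"
  have x: "u = 2*x + 7" unfolding x_def using g(2) by presburger
  have xp: "x > 0" using x g(5) by simp
  have eq: "x^2 + (x+7)^2 = z^2" using g(1) x by (simp add: power2_eq_square algebra_simps)
  have gc: "gcd (gcd x (x+7)) z = 1"
  proof -
    define d where "d = gcd (gcd x (x+7)) z"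
    have d0: "d \<ge> 0" unfolding d_def by simp
    have dx: "d dvd x" "d dvd x+7" "d dvd z" unfolding d_def
      by (meson dvd_trans gcd_dvd1 gcd_dvd2)+
    have d7: "d dvd 7" using dx by (metis add_diff_cancel_left' dvd_diff)
    have "d \<noteq> 0" using dx(3) g(3) by auto
    then have "d > 0" using d0 by simp
    moreover have "d \<le> 7" using d7 by (simp add: zdvd_imp_le)
    ultimately have "d \<in> {1,2,3,4,5,6,7}" using small_int_cases[of d] by auto
    moreover have "d \<noteq> 7"
    proof
      assume "d = 7"
      then have "7 dvd u \<and> 7 dvd z" using dx x by simp
      then show False using g(4) by simp
    qed
    ultimately show ?thesis using d7 unfolding d_def by auto
  qed
  show "z \<in> {z :: int. \<exists>x y :: int. x > 0 \<and> y > 0 \<and> z > 0 \<and> x^2 + y^2 = z^2 \<and> y = x + 7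
            \<and> gcd (gcd x y) z = 1}"
    using xp eq gc g(3) by (intro CollectI exI[of _ x] exI[of _ "x+7"]) simp
qed

end
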